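(* For every integer $n\ge 0$ and every real number $x$, \[ \sum_{l=0}^{n}\frac{\binom{n}{l}E_{n-l}(x)}{n+l+1}=\sum_{l=0}^{n}(-1)^l\,\frac{E_{n-l}(1+x)}{n+l+1}\,\frac{\binom{n}{l}}{\binom{n+l}{l}} . \] In particular, for $x=0$, \[ \sum_{l=0}^{n}\frac{\binom{n}{l}E_{n-l}}{n+l+1}=(-1)^n\sum_{l=0}^{n}\frac{E_{n-l}}{n+l+1}\,\frac{\binom{n}{l}}{\binom{n+l}{l}} . \]
   Context: The Euler polynomials $E_n(x)$ are defined by the generating function $\frac{2}{e^t+1}e^{xt}=\sum_{n\ge0}E_n(x)\frac{t^n}{n!}$, and the Euler numbers are $E_n=E_n(0)$, i.e. $\frac{2}{e^t+1}=\sum_{n\ge 0}E_n\frac{t^n}{n!}$. *)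

theory Defs
  imports "HOL-Computational_Algebra.Formal_Power_Series"
begin

definition euler_poly :: "nat \<Rightarrow> real \<Rightarrow> real" where
  "euler_poly n x =
     fact n * fps_nth (fps_const 2 * fps_exp x / (fps_exp 1 + 1)) n"

definition euler_num :: "nat \<Rightarrow> real" where
  "euler_num n = euler_poly n 0"

end

theory Submission
  imports Defs
begin

definition bb :: "nat \<Rightarrow> nat \<Rightarrow> real" where
  "bb n l = fact n * fact l / fact (n + l + 1)"

lemma bb_step: "bb n (Suc l) = bb n l - bb (Suc n) l"
proof -
  have gen: "\<And>F a b. F > 0 \<Longrightarrow> a * (real (l+1) * b) / (real (n+l+2) * F)
      = a * b / F - real (n+1) * a * b / (real (n+l+2) * F)"
  proof -
    fix F a b :: real assume F: "F > 0"
    have nz: "real (n+l+2) * F \<noteq> 0" using F by simp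
    have "a * b / F = real (n+l+2) * a * b / (real (n+l+2) * F)" using F by simp
    then show "a * (real (l+1) * b) / (real (n+l+2) * F)
      = a * b / F - real (n+1) * a * b / (real (n+l+2) * F)"
      by (simp add: diff_divide_distrib[symmetric] algebra_simps)
  qed
  have e1: "fact (n + Suc l + 1) = (real (n + l + 2)) * fact (n + l + 1)"
    by (simp add: algebra_simps)
  have e2: "fact (Suc n + l + 1) = (real (n + l + 2)) * fact (n + l + 1)"
    by (simp add: algebra_simps)
  have e3: "fact (Suc l) = real (l+1) * fact l" "fact (Suc n) = real (n+1) * fact n"
    by simp_all
  have p: "fact (n + l + 1) > (0::real)" by simp
  show ?thesis unfolding bb_def e1 e2 e3
    using gen[OF p, of "fact n" "fact l"] by (simp add: mult.assoc)
qed

definition TT :: "nat \<Rightarrow> nat \<Rightarrow> real" where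
  "TT m n = (\<Sum>l=0..m. (-1)^l * real (m choose l) * bb n l)"

lemma TT_Suc: "TT (Suc m) n = TT m (Suc n)"
proof -
  let ?f = "\<lambda>l. (-1)^l * real (Suc m choose l) * bb n l"
  have A: "TT (Suc m) n = ?f 0 + (\<Sum>l=0..m. ?f (Suc l))"
    unfolding TT_def by (subst sum.atLeast0_atMost_Suc_shift) simp
  have B: "(\<Sum>l=0..m. ?f (Suc l)) = (\<Sum>l=0..m. (-1)^(Suc l) * real (m choose Suc l) * bb n (Suc l))
        + (\<Sum>l=0..m. (-1)^(Suc l) * real (m choose l) * bb n (Suc l))"
    by (simp add: sum.distrib[symmetric] algebra_simps)
  have C: "(\<Sum>l=0..Suc m. (-1)^l * real (m choose l) * bb n l)
     = bb n 0 + (\<Sum>l=0..m. (-1)^(Suc l) * real (m choose Suc l) * bb n (Suc l))"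
    by (subst sum.atLeast0_atMost_Suc_shift) simp
  have D: "(\<Sum>l=0..Suc m. (-1)^l * real (m choose l) * bb n l) = TT m n"
    unfolding TT_def by simp
  have E: "(\<Sum>l=0..m. (-1)^(Suc l) * real (m choose l) * bb n (Suc l)) = TT m (Suc n) - TT m n"
    unfolding TT_def bb_step by (simp add: sum_subtractf[symmetric] algebra_simps)
  show ?thesis using A B C D E by simp
qed

lemma TT_val: "TT m n = 1 / real (n + m + 1)"
proof (induction m arbitrary: n)
  case 0
  then show ?case by (simp add: TT_def bb_def fact_Suc)
next
  case (Suc m)
  then show ?case by (simp add: TT_Suc)
qed


lemma term_eq:
  assumes "l \<le> m" "n = k + m"
  shows "(-1)^l * real (n-l choose k) * (real (n choose l) / (real (n+l+1) * real (n+l choose l)))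
       = real (n choose k) * ((-1)^l * real (m choose l) * bb n l)"
proof -
  obtain r where m: "m = l + r" using assms(1) le_Suc_ex by blast
  have n: "n = k + l + r" using assms(2) m by simp
  have gen: "\<And>A K R N L M Q P::real. A > 0 \<Longrightarrow> K > 0 \<Longrightarrow> R > 0 \<Longrightarrow> N > 0 \<Longrightarrow> L > 0
      \<Longrightarrow> M > 0 \<Longrightarrow> Q > 0 \<Longrightarrow> P > 0 \<Longrightarrow>
      (-1)^l * (A/(K*R)) * ((N/(L*A)) / (Q * (M/(L*N))))
      = (N/(K*P)) * ((-1)^l * (P/(L*R)) * (N * L / (Q*M)))"
    by (simp add: field_simps)
  have b1: "real (n-l choose k) = fact (k+r) / (fact k * fact r)"
    using binomial_fact[of k "n-l", where 'a=real] n by simp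
  have b2: "real (n choose l) = fact n / (fact l * fact (k+r))"
    using binomial_fact[of l n, where 'a=real] n by simp
  have b3: "real (n+l choose l) = fact (n+l) / (fact l * fact n)"
    using binomial_fact[of l "n+l", where 'a=real] by simp
  have b4: "real (n choose k) = fact n / (fact k * fact (l+r))"
    using binomial_fact[of k n, where 'a=real] n by simp
  have b5: "real (m choose l) = fact (l+r) / (fact l * fact r)"
    using binomial_fact[of l m, where 'a=real] m by simp
  have b6: "bb n l = fact n * fact l / (real (n+l+1) * fact (n+l))"
    unfolding bb_def by (simp add: algebra_simps)
  show ?thesis unfolding b1 b2 b3 b4 b5 b6
    by (rule gen) auto
qed

lemma coef:
  assumes "k \<le> n"
  shows "(\<Sum>l=0..n. (-1)^l * real (n-l choose k) * (real (n choose l) / (real (n+l+1) * real (n+l choose l))))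
       = real (n choose k) / real (n + (n-k) + 1)"
proof -
  obtain m where nm: "n = k + m" using assms le_Suc_ex by blast
  have "(\<Sum>l=0..n. (-1)^l * real (n-l choose k) * (real (n choose l) / (real (n+l+1) * real (n+l choose l))))
      = (\<Sum>l=0..m. (-1)^l * real (n-l choose k) * (real (n choose l) / (real (n+l+1) * real (n+l choose l))))"
  proof (rule sum.mono_neutral_right)
    show "{0..m} \<subseteq> {0..n}" using nm by auto
    show "\<forall>i\<in>{0..n} - {0..m}. (-1)^i * real (n-i choose k) * (real (n choose i) / (real (n+i+1) * real (n+i choose i))) = 0"
      using nm by auto
  qed simp
  also have "\<dots> = (\<Sum>l=0..m. real (n choose k) * ((-1)^l * real (m choose l) * bb n l))"
    by (rule sum.cong[OF refl]) (rule term_eq[OF _ nm], simp)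
  also have "\<dots> = real (n choose k) * TT m n"
    unfolding TT_def by (simp add: sum_distrib_left)
  also have "\<dots> = real (n choose k) / real (n + (n-k) + 1)"
    unfolding TT_val using nm by simp
  finally show ?thesis .
qed

lemma key:
  fixes a :: "nat \<Rightarrow> real"
  shows "(\<Sum>l=0..n. real (n choose l) * a (n-l) / real (n+l+1))
       = (\<Sum>l=0..n. (-1)^l * ((\<Sum>k=0..n-l. real (n-l choose k) * a k) / real (n+l+1))
            * (real (n choose l) / real ((n+l) choose l)))"
proof -
  define \<beta> where "\<beta> l = real (n choose l) / (real (n+l+1) * real (n+l choose l))" for l
  have "(\<Sum>l=0..n. (-1)^l * ((\<Sum>k=0..n-l. real (n-l choose k) * a k) / real (n+l+1))
            * (real (n choose l) / real ((n+l) choose l)))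
      = (\<Sum>l=0..n. \<Sum>k=0..n. a k * ((-1)^l * real (n-l choose k) * \<beta> l))"
  proof (rule sum.cong[OF refl])
    fix l assume l: "l \<in> {0..n}"
    have "(\<Sum>k=0..n-l. real (n-l choose k) * a k) = (\<Sum>k=0..n. real (n-l choose k) * a k)"
      by (rule sum.mono_neutral_left) auto
    then show "(-1)^l * ((\<Sum>k=0..n-l. real (n-l choose k) * a k) / real (n+l+1))
            * (real (n choose l) / real ((n+l) choose l))
        = (\<Sum>k=0..n. a k * ((-1)^l * real (n-l choose k) * \<beta> l))"
      by (simp add: \<beta>_def sum_distrib_left sum_distrib_right sum_divide_distrib) 
         (rule sum.cong, auto simp: field_simps)
  qed
  also have "\<dots> = (\<Sum>k=0..n. a k * (\<Sum>l=0..n. (-1)^l * real (n-l choose k) * \<beta> l))"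
    by (subst sum.swap) (simp add: sum_distrib_left)
  also have "\<dots> = (\<Sum>k=0..n. a k * (real (n choose k) / real (n + (n-k) + 1)))"
  proof (rule sum.cong[OF refl])
    fix k assume k: "k \<in> {0..n}"
    have "(\<Sum>l=0..n. (-1)^l * real (n-l choose k) * \<beta> l) = real (n choose k) / real (n + (n-k) + 1)"
      unfolding \<beta>_def using k by (intro coef) simp
    then show "a k * (\<Sum>l=0..n. (-1)^l * real (n-l choose k) * \<beta> l) = a k * (real (n choose k) / real (n + (n-k) + 1))"
      by simp
  qed
  also have "\<dots> = (\<Sum>l=0..n. real (n choose l) * a (n-l) / real (n+l+1))"
  proof -
    have "(\<Sum>l=0..n. real (n choose l) * a (n-l) / real (n+l+1))
        = (\<Sum>l=0..n. real (n choose (n + 0 - l)) * a (n-(n + 0 - l)) / real (n+(n + 0 - l)+1))"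
      by (rule sum.atLeastAtMost_rev)
    also have "\<dots> = (\<Sum>k=0..n. a k * (real (n choose k) / real (n + (n-k) + 1)))"
      by (rule sum.cong[OF refl]) (auto simp: binomial_symmetric[symmetric])
    finally show ?thesis by simp
  qed
  finally show ?thesis by simp
qed

lemma appell: "euler_poly m (1+x) = (\<Sum>k=0..m. real (m choose k) * euler_poly k x)"
proof -
  define D :: "real fps" where "D = fps_exp 1 + 1"
  have D0: "fps_nth D 0 \<noteq> 0" by (simp add: D_def)
  have eq: "fps_const 2 * fps_exp (1+x) / D = fps_exp 1 * (fps_const 2 * fps_exp x / D)"
    using D0 by (simp add: fps_divide_unit fps_exp_add_mult ac_simps)
  have "euler_poly m (1+x) = fact m * fps_nth (fps_exp 1 * (fps_const 2 * fps_exp x / D)) m"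
    unfolding euler_poly_def D_def[symmetric] eq by simp
  also have "\<dots> = (\<Sum>i=0..m. real (m choose (m-i)) * euler_poly (m-i) x)"
    unfolding fps_mult_nth sum_distrib_left
  proof (rule sum.cong[OF refl])
    fix i assume i: "i \<in> {0..m}"
    have "real (m choose (m-i)) = fact m / (fact (m-i) * fact i)"
      using binomial_fact[of "m-i" m, where 'a=real] i by simp
    then show "fact m * (fps_nth (fps_exp 1) i * fps_nth (fps_const 2 * fps_exp x / D) (m - i))
      = real (m choose (m-i)) * euler_poly (m-i) x"
      unfolding euler_poly_def D_def by simp
  qed
  also have "\<dots> = (\<Sum>k=0..m. real (m choose k) * euler_poly k x)"
    by (subst sum.atLeastAtMost_rev) (rule sum.cong, auto)
  finally show ?thesis .
qed

lemma symm: "euler_poly k 1 = (-1)^k * euler_poly k 0"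
proof -
  define D :: "real fps" where "D = fps_exp 1 + 1"
  have D0: "fps_nth D 0 \<noteq> 0" by (simp add: D_def)
  define H where "H = fps_const 2 * inverse D"
  have X0: "fps_nth (- fps_X :: real fps) 0 = 0" by simp
  have DX: "D oo - fps_X = fps_exp (-1) + 1"
    unfolding D_def by (simp add: fps_compose_add_distrib)
  have inv: "inverse (fps_exp (-1) + 1) = fps_exp 1 * inverse D"
  proof (rule fps_inverse_unique)
    have "(fps_exp (-1) + 1) * fps_exp 1 = (D :: real fps)"
      unfolding D_def by (simp add: distrib_right fps_exp_add_mult[symmetric] add.commute)
    then have "(fps_exp (-1) + 1) * (fps_exp 1 * inverse D) = D * inverse D"
      by (metis mult.assoc)
    also have "\<dots> = 1" using D0 by (rule inverse_mult_eq_1')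
    finally show "(fps_exp (-1) + 1) * (fps_exp 1 * inverse D) = (1::real fps)" .
  qed
  have "H oo - fps_X = fps_const 2 * fps_exp 1 * inverse D"
    unfolding H_def fps_compose_mult_distrib[OF X0] fps_inverse_compose[OF X0 D0] DX inv
    by (simp add: mult.assoc)
  then have "fps_nth (H oo - fps_X) k = fps_nth (fps_const 2 * fps_exp 1 * inverse D) k" by simp
  then have "(-1)^k * fps_nth H k = fps_nth (fps_const 2 * fps_exp 1 * inverse D) k"
    unfolding fps_compose_uminus' by simp
  then show ?thesis
    unfolding euler_poly_def H_def using D0
    by (simp add: fps_divide_unit D_def)
qed

lemma gen3: "(a::real) * b = c \<Longrightarrow> a * (b * e / q) * r = c * (e / q * r)"
  by (auto simp: algebra_simps)

theorem theorem1:
  fixes n :: nat and x :: real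
  shows "(\<Sum>l=0..n. real (n choose l) * euler_poly (n - l) x / real (n + l + 1))
           = (\<Sum>l=0..n. (-1) ^ l * (euler_poly (n - l) (1 + x) / real (n + l + 1))
                 * (real (n choose l) / real ((n + l) choose l)))
         \<and>
         (\<Sum>l=0..n. real (n choose l) * euler_num (n - l) / real (n + l + 1))
           = (-1) ^ n * (\<Sum>l=0..n. (euler_num (n - l) / real (n + l + 1))
                 * (real (n choose l) / real ((n + l) choose l)))"
proof -
  have A: "\<And>x. (\<Sum>l=0..n. real (n choose l) * euler_poly (n - l) x / real (n + l + 1))
           = (\<Sum>l=0..n. (-1) ^ l * (euler_poly (n - l) (1 + x) / real (n + l + 1))
                 * (real (n choose l) / real ((n + l) choose l)))"
    unfolding appell by (rule key)
  have "(\<Sum>l=0..n. real (n choose l) * euler_num (n - l) / real (n + l + 1))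
      = (\<Sum>l=0..n. (-1) ^ l * (euler_poly (n - l) 1 / real (n + l + 1))
                 * (real (n choose l) / real ((n + l) choose l)))"
    using A[of 0] unfolding euler_num_def by simp
  also have "\<dots> = (\<Sum>l=0..n. (-1) ^ n * ((euler_num (n - l) / real (n + l + 1))
                 * (real (n choose l) / real ((n + l) choose l))))"
  proof (rule sum.cong[OF refl])
    fix l assume l: "l \<in> {0..n}"
    have "(-1::real)^l * (-1)^(n-l) = (-1)^n"
      using l by (simp add: power_add[symmetric])
    then show "(-1) ^ l * (euler_poly (n - l) 1 / real (n + l + 1))
                 * (real (n choose l) / real ((n + l) choose l))
       = (-1) ^ n * ((euler_num (n - l) / real (n + l + 1))
                 * (real (n choose l) / real ((n + l) choose l)))"
      unfolding symm euler_num_def by (rule gen3)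
  qed
  also have "\<dots> = (-1) ^ n * (\<Sum>l=0..n. (euler_num (n - l) / real (n + l + 1))
                 * (real (n choose l) / real ((n + l) choose l)))"
    by (simp add: sum_distrib_left)
  finally show ?thesis using A by simp
qed

end
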